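(* Let $1<a_1<a_2$ be coprime integers. The function $r_0:[1,\infty]\to[0,1]$ is strictly decreasing.
   Context: For $t\in[1,\infty)$ and $(u,v)\in\mathbb{R}^2$, $\|(u,v)\|_t=(|u|^t+|v|^t)^{1/t}$, and $\|(u,v)\|_\infty=\max(|u|,|v|)$. For $t\in[1,\infty]$ define $\mu_t(r)=\left\|\left(\frac{1-r}{a_1},\frac{r}{a_2}\right)\right\|_t$ for $r\in[0,1]$, and $r_0(t)=\min\{r\in[0,1]:\mu_t(r)=\frac{1}{a_2}\}$. The domain $[1,\infty]$ is ordered with $\infty$ as its largest element. *)

theory Defs
  imports "HOL-Analysis.Analysis" "HOL-Library.Extended_Real"
begin

text \<open>The t-norm on R^2 for t in [1,\<infinity>], with t encoded as an extended real
  (t = \<infinity> gives the max norm).\<close>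
definition tnorm :: "ereal \<Rightarrow> real \<Rightarrow> real \<Rightarrow> real" where
  "tnorm t u v = (if t = \<infinity> then max \<bar>u\<bar> \<bar>v\<bar>
     else (\<bar>u\<bar> powr real_of_ereal t + \<bar>v\<bar> powr real_of_ereal t) powr (1 / real_of_ereal t))"

definition mu :: "real \<Rightarrow> real \<Rightarrow> ereal \<Rightarrow> real \<Rightarrow> real" where
  "mu a1 a2 t r = tnorm t ((1 - r) / a1) (r / a2)"

definition r0 :: "real \<Rightarrow> real \<Rightarrow> ereal \<Rightarrow> real" where
  "r0 a1 a2 t = (LEAST r. r \<in> {0..1} \<and> mu a1 a2 t r = 1 / a2)"

end

theory Submission
  imports Defs
begin

lemma mu_fin: "mu a b (ereal T) r = (\<bar>(1-r)/a\<bar> powr T + \<bar>r/b\<bar> powr T) powr (1/T)"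
  by (simp add: mu_def tnorm_def)

lemma mu_inf: "mu a b \<infinity> r = max \<bar>(1-r)/a\<bar> \<bar>r/b\<bar>"
  by (simp add: mu_def tnorm_def)

lemma mu_cont:
  assumes "1 \<le> t" "a > 0" "b > 0"
  shows "continuous_on {0..1} (mu a b t)"
proof (cases t)
  case (real T)
  with assms have T: "T \<ge> 1" by simp
  have "continuous_on {0..1} (\<lambda>r. (\<bar>(1-r)/a\<bar> powr T + \<bar>r/b\<bar> powr T) powr (1/T))"
  proof (rule continuous_on_powr')
    have c1: "continuous_on {0..1::real} (\<lambda>r. \<bar>(1-r)/a\<bar> powr T)"
      using T assms by (intro continuous_on_powr' continuous_intros) auto
    have c2: "continuous_on {0..1::real} (\<lambda>r. \<bar>r/b\<bar> powr T)"
      using T assms by (intro continuous_on_powr' continuous_intros) auto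
    show "continuous_on {0..1} (\<lambda>r. \<bar>(1-r)/a\<bar> powr T + \<bar>r/b\<bar> powr T)"
      using c1 c2 by (rule continuous_on_add)
  qed (use T in auto)
  then show ?thesis using real by (simp add: mu_fin)
next
  case PInf
  have "continuous_on {0..1} (\<lambda>r. max \<bar>(1-r)/a\<bar> \<bar>r/b\<bar>)" using assms by (intro continuous_intros) auto
  then show ?thesis using PInf by (simp add: mu_inf)
next
  case MInf
  then show ?thesis using assms by simp
qed

lemma mu_one:
  assumes "1 \<le> t" "b > 0"
  shows "mu a b t 1 = 1/b"
proof (cases t)
  case (real T)
  then have "T \<ge> 1" using assms by simp
  then show ?thesis using real assms by (simp add: mu_fin powr_powr)
qed (use assms in \<open>auto simp: mu_inf\<close>)

lemma mu_zero:
  assumes "1 \<le> t" "a > 0"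
  shows "mu a b t 0 = 1/a"
proof (cases t)
  case (real T)
  then have "T \<ge> 1" using assms by simp
  then show ?thesis using real assms by (simp add: mu_fin powr_powr)
qed (use assms in \<open>auto simp: mu_inf\<close>)

lemma comp_lt_norm:
  fixes x y P :: real
  assumes "x > 0" "y > 0" "P > 0"
  shows "x < (x powr P + y powr P) powr (1/P)"
proof -
  have "x powr P < x powr P + y powr P" using assms by simp
  then have "(x powr P) powr (1/P) < (x powr P + y powr P) powr (1/P)"
    using assms by (intro powr_less_mono2) auto
  then show ?thesis using assms by (simp add: powr_powr)
qed

lemma pnorm_strict:
  fixes x y P Q :: real
  assumes "x > 0" "y > 0" "1 \<le> P" "P < Q"
  shows "(x powr Q + y powr Q) powr (1/Q) < (x powr P + y powr P) powr (1/P)"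
proof -
  define N where "N = (x powr P + y powr P) powr (1/P)"
  have xN: "x < N" unfolding N_def using assms comp_lt_norm by auto
  have yN: "y < N" unfolding N_def using assms comp_lt_norm[of y x P] by (auto simp: add.commute)
  have N0: "N > 0" using xN assms by simp
  have NP: "N powr P = x powr P + y powr P" unfolding N_def using assms by (simp add: powr_powr)
  have u: "(x/N) powr Q < (x/N) powr P" using xN N0 assms by (intro powr_less_mono') auto
  have v: "(y/N) powr Q < (y/N) powr P" using yN N0 assms by (intro powr_less_mono') auto
  have "(x/N) powr P + (y/N) powr P = (x powr P + y powr P) / N powr P"
    using N0 assms by (simp add: powr_divide add_divide_distrib)
  also have "\<dots> = 1" unfolding NP[symmetric] using N0 by simp
  finally have "(x/N) powr P + (y/N) powr P = 1" .
  then have s1: "(x/N) powr Q + (y/N) powr Q < 1" using u v by simp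
  have "x powr Q + y powr Q = N powr Q * ((x/N) powr Q + (y/N) powr Q)"
    using N0 assms by (simp add: powr_divide field_simps)
  also have "\<dots> < N powr Q" using s1 N0 by simp
  finally have "(x powr Q + y powr Q) powr (1/Q) < (N powr Q) powr (1/Q)"
    using assms by (intro powr_less_mono2) auto
  then show ?thesis using assms N0 by (simp add: powr_powr N_def[symmetric])
qed

lemma mu_strict:
  assumes "1 \<le> s" "s < t" "0 < r" "r < 1" "a > 0" "b > 0"
  shows "mu a b t r < mu a b s r"
proof -
  obtain S where S: "s = ereal S" "1 \<le> S" using assms by (cases s) auto
  have x: "\<bar>(1-r)/a\<bar> > 0" "\<bar>r/b\<bar> > 0" using assms by auto
  show ?thesis
  proof (cases t)
    case (real T)
    then have "S < T" using S assms by simp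
    then show ?thesis using real S pnorm_strict[OF x] by (simp add: mu_fin)
  next
    case PInf
    then show ?thesis using S x comp_lt_norm[OF x] comp_lt_norm[of "\<bar>r/b\<bar>" "\<bar>(1-r)/a\<bar>" S]
      by (auto simp: mu_fin mu_inf add.commute)
  qed (use assms in auto)
qed

lemma r0_char:
  assumes "1 \<le> t" "0 < a" "a < b"
  shows "r0 a b t \<in> {0..1}" "mu a b t (r0 a b t) = 1/b"
        "\<And>y. y \<in> {0..1} \<Longrightarrow> mu a b t y = 1/b \<Longrightarrow> r0 a b t \<le> y"
proof -
  define S where "S = {r \<in> {0..1}. mu a b t r = 1/b}"
  have cl: "closed S" unfolding S_def
    using assms by (intro continuous_closed_preimage_constant mu_cont) auto
  have ne: "S \<noteq> {}" using mu_one[of t b a] assms unfolding S_def by force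
  have bd: "bdd_below S" unfolding S_def by (rule bdd_belowI[of _ 0]) auto
  have IS: "Inf S \<in> S" using closed_contains_Inf[OF ne bd cl] .
  have "r0 a b t = Inf S" unfolding r0_def
  proof (rule Least_equality)
    show "Inf S \<in> {0..1} \<and> mu a b t (Inf S) = 1 / b" using IS unfolding S_def by blast
  next
    fix y assume "y \<in> {0..1} \<and> mu a b t y = 1 / b"
    then have "y \<in> S" unfolding S_def by blast
    then show "Inf S \<le> y" using bd by (rule cInf_lower)
  qed
  then show "r0 a b t \<in> {0..1}" "mu a b t (r0 a b t) = 1/b"
        "\<And>y. y \<in> {0..1} \<Longrightarrow> mu a b t y = 1/b \<Longrightarrow> r0 a b t \<le> y"
    using IS bd unfolding S_def by (auto intro: cInf_lower)
qed

lemma mu1_eq: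
  assumes "0 < a" "a < b" "0 \<le> r" "r \<le> 1" "mu a b 1 r = 1/b"
  shows "r = 1"
proof -
  have "(1-r)/a + r/b = 1/b" using assms by (simp add: mu_def tnorm_def one_ereal_def)
  then have "(1-r)/a = (1-r)/b" by (simp add: diff_divide_distrib)
  then show ?thesis using assms by (cases "r = 1") auto
qed

lemma exists_below:
  assumes "1 < t" "0 < a" "a < b"
  shows "\<exists>p. 0 \<le> p \<and> p < 1 \<and> mu a b t p < 1/b"
proof (cases t)
  case PInf
  define p where "p = 1 - a/(2*b)"
  have "a/(2*b) < 1/2" "a/(2*b) > 0" using assms by (auto simp: field_simps)
  then have p: "0 \<le> p" "p < 1" unfolding p_def by auto
  have "\<bar>(1-p)/a\<bar> = 1/(2*b)" unfolding p_def using assms by simp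
  moreover have "\<bar>p/b\<bar> < 1/b" using p assms by (simp add: divide_strict_right_mono)
  moreover have "1/(2*b) < 1/b" using assms by (simp add: field_simps)
  ultimately have "mu a b t p < 1/b" using PInf by (simp add: mu_inf)
  then show ?thesis using p by blast
next
  case (real T)
  then have T: "T > 1" using assms by simp
  define e where "e = ((a/b) powr (T/(T-1))) / 2"
  have ab: "0 < a/b" "a/b < 1" using assms by auto
  have "(a/b) powr (T/(T-1)) \<le> 1" using ab T by (intro powr_le1) auto
  moreover have "(a/b) powr (T/(T-1)) > 0" using assms by simp
  ultimately have e: "0 < e" "e < 1" unfolding e_def by auto
  have "e < (a/b) powr (T/(T-1))" unfolding e_def using ab assms by simp
  then have "e powr (T-1) < ((a/b) powr (T/(T-1))) powr (T-1)"
    using e T by (intro powr_less_mono2) auto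
  also have "\<dots> = (a/b) powr T" using T by (simp add: powr_powr)
  finally have e1: "e powr (T-1) < (a/b) powr T" .
  have "e powr T = e * e powr (T-1)" using e by (simp add: powr_diff)
  also have "\<dots> < e * (a/b) powr T" using e1 e by simp
  finally have e2: "e powr T < e * (a/b) powr T" .
  define p where "p = 1 - e"
  have p: "0 \<le> p" "p < 1" using e unfolding p_def by auto
  have t1: "\<bar>(1-p)/a\<bar> powr T = e powr T / a powr T"
    unfolding p_def using e assms by (simp add: powr_divide)
  also have "\<dots> < e * (a/b) powr T / a powr T" using e2 assms by (simp add: divide_strict_right_mono)
  also have "\<dots> = e / b powr T" using assms by (simp add: powr_divide)
  finally have t1': "\<bar>(1-p)/a\<bar> powr T < e / b powr T" .
  have "p powr T \<le> p powr 1" using p T by (intro powr_mono') auto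
  then have "\<bar>p/b\<bar> powr T \<le> (1-e) / b powr T" using p assms unfolding p_def
    by (simp add: powr_divide divide_right_mono)
  moreover have "e / b powr T + (1-e) / b powr T = 1 / b powr T"
    by (simp add: add_divide_distrib[symmetric])
  ultimately have "\<bar>(1-p)/a\<bar> powr T + \<bar>p/b\<bar> powr T < 1 / b powr T"
    using t1' by linarith
  then have "(\<bar>(1-p)/a\<bar> powr T + \<bar>p/b\<bar> powr T) powr (1/T) < (1 / b powr T) powr (1/T)"
    using T by (intro powr_less_mono2) auto
  also have "\<dots> = 1/b" using T assms by (simp add: powr_divide powr_powr)
  finally show ?thesis using real p by (auto simp: mu_fin)
qed (use assms in auto)

lemma crossing:
  assumes "1 \<le> t" "0 < a" "a < b" "0 \<le> q" "q \<le> 1" "mu a b t q < 1/b"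
  shows "\<exists>x. 0 \<le> x \<and> x < q \<and> mu a b t x = 1/b"
proof -
  have c: "continuous_on {0..q} (mu a b t)"
  proof -
    have "continuous_on {0..1} (mu a b t)" using mu_cont[of t a b] assms by auto
    then show ?thesis by (rule continuous_on_subset) (use assms in auto)
  qed
  have "1/b < 1/a" using assms by (simp add: frac_less2)
  then have "mu a b t q \<le> 1/b" "1/b \<le> mu a b t 0" using assms mu_zero[of t a b] by auto
  then obtain x where x: "0 \<le> x" "x \<le> q" "mu a b t x = 1/b" using IVT2'[OF _ _ _ c] assms by blast
  then have "x \<noteq> q" using assms by auto
  then show ?thesis using x by auto
qed

lemma main:
  assumes "1 \<le> s" "s < t" "0 < a" "a < b"
  shows "r0 a b t < r0 a b s"
proof -
  have t1: "1 \<le> t" "1 < t" using assms by auto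
  obtain q where q: "0 \<le> q" "q \<le> r0 a b s" "r0 a b s \<le> 1" "mu a b t q < 1/b"
  proof (cases "s = 1")
    case True
    have "r0 a b s = 1" using r0_char[of s a b] mu1_eq[of a b "r0 a b s"] assms True by auto
    moreover obtain p where "0 \<le> p" "p < 1" "mu a b t p < 1/b" using exists_below[OF t1(2)] assms by blast
    ultimately show ?thesis using that by auto
  next
    case False
    then have s1: "1 < s" using assms by auto
    obtain p where p: "0 \<le> p" "p < 1" "mu a b s p < 1/b" using exists_below[OF s1] assms by blast
    obtain x where x: "0 \<le> x" "x < p" "mu a b s x = 1/b" using crossing[of s a b p] p assms by auto
    have m1: "r0 a b s < 1" using r0_char(3)[of s a b x] x p assms by auto
    have mrange: "r0 a b s \<in> {0..1}" "mu a b s (r0 a b s) = 1/b" using r0_char[of s a b] assms by auto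
    have "1/b < 1/a" using assms by (simp add: frac_less2)
    then have "r0 a b s \<noteq> 0" using mrange mu_zero[of s a b] assms by auto
    then have m0: "0 < r0 a b s" using mrange by auto
    have mt: "mu a b t (r0 a b s) < 1/b" using mu_strict[of s t "r0 a b s" a b] m0 m1 mrange assms by auto
    show ?thesis using m0 m1 mt by (intro that[of "r0 a b s"]) auto
  qed
  then obtain x where x: "0 \<le> x" "x < q" "mu a b t x = 1/b" using crossing[of t a b q] t1 assms by auto
  have "r0 a b t \<le> x" using r0_char(3)[of t a b x] x q t1 assms by auto
  then show ?thesis using x q by auto
qed

theorem lemma4:
  fixes a1 a2 :: int
  assumes "1 < a1" and "a1 < a2" and "coprime a1 a2"
  shows "\<forall>s t :: ereal. 1 \<le> s \<longrightarrow> s < t \<longrightarrow>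
           r0 (real_of_int a1) (real_of_int a2) t < r0 (real_of_int a1) (real_of_int a2) s"
  using main assms by auto

end
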